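(* Let $G=(V,E)$ be an infinite, connected, locally finite graph (no self-loops) and let $v\in V$. Then the sequence $\big(\mathbb{P}_v(\tau_v=2t)\big)_{t\geq 1}$ is non-increasing in $t$.
   Context: $(X_t)$ is simple random walk on $G$ with $X_0=v$ and $\tau_v=\min\{t\geq 1:X_t=v\}$. *)

theory Defs
  imports "HOL-Probability.Probability"
begin

text \<open>Simple random walk on a simple graph given by a symmetric, irreflexive
edge relation E. One step from u: uniform distribution on the neighbours of u.\<close>

definition srw_step :: "('a \<Rightarrow> 'a \<Rightarrow> bool) \<Rightarrow> 'a \<Rightarrow> 'a pmf" where
  "srw_step E u = pmf_of_set {w. E u w}"

text \<open>srw_path E n u is the law of the trajectory [X_0, X_1, ..., X_n] of the
simple random walk started at X_0 = u.\<close>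

fun srw_path :: "('a \<Rightarrow> 'a \<Rightarrow> bool) \<Rightarrow> nat \<Rightarrow> 'a \<Rightarrow> 'a list pmf" where
  "srw_path E 0 u = return_pmf [u]"
| "srw_path E (Suc n) u =
     bind_pmf (srw_step E u) (\<lambda>w. map_pmf (\<lambda>xs. u # xs) (srw_path E n w))"

text \<open>P_v(tau_v = n) for n \<ge> 1, where tau_v = min{t \<ge> 1. X_t = v} and X_0 = v.\<close>

definition first_return_prob :: "('a \<Rightarrow> 'a \<Rightarrow> bool) \<Rightarrow> 'a \<Rightarrow> nat \<Rightarrow> real" where
  "first_return_prob E v n =
     measure_pmf.prob (srw_path E n v)
       {xs. xs ! n = v \<and> (\<forall>i\<in>{1..<n}. xs ! i \<noteq> v)}"

end

theory Submission
  imports Defs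
begin

lemma measure_bind_pmf_of_set:
  assumes "A \<noteq> {}" "finite A"
  shows "measure_pmf.prob (bind_pmf (pmf_of_set A) f) X = (\<Sum>a\<in>A. measure_pmf.prob (f a) X) / card A"
proof -
  have "ennreal (measure_pmf.prob (bind_pmf (pmf_of_set A) f) X) = emeasure (bind_pmf (pmf_of_set A) f) X"
    by (simp add: measure_pmf.emeasure_eq_measure)
  also have "\<dots> = (\<Sum>a\<in>A. emeasure (f a) X) / card A"
    using assms by (simp add: nn_integral_pmf_of_set)
  also have "\<dots> = ennreal ((\<Sum>a\<in>A. measure_pmf.prob (f a) X) / card A)"
    using assms by (simp add: measure_pmf.emeasure_eq_measure sum_nonneg ennreal_of_nat_eq_real_of_nat, subst divide_ennreal, auto intro: sum_nonneg simp: card_gt_0_iff)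
  finally show ?thesis by (subst (asm) ennreal_inj) (auto intro!: sum_nonneg divide_nonneg_nonneg)
qed

locale srwG =
  fixes V :: "'a set" and E :: "'a \<Rightarrow> 'a \<Rightarrow> bool" and v :: 'a
  assumes edges_in_V: "\<And>u w. E u w \<Longrightarrow> u \<in> V \<and> w \<in> V"
    and sym: "\<And>u w. E u w \<Longrightarrow> E w u"
    and no_loops: "\<And>u. \<not> E u u"
    and locally_finite: "\<And>u. u \<in> V \<Longrightarrow> finite {w. E u w}"
    and connected: "\<And>u w. u \<in> V \<Longrightarrow> w \<in> V \<Longrightarrow> E\<^sup>*\<^sup>* u w"
    and infinite_V: "infinite V"
    and v_in_V: "v \<in> V"
begin

definition N where "N u = {w. E u w}"
definition d where "d u = real (card (N u))"

lemma N_fin: "u \<in> V \<Longrightarrow> finite (N u)"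
  using locally_finite by (simp add: N_def)

lemma N_V: "w \<in> N u \<Longrightarrow> w \<in> V"
  using edges_in_V by (auto simp: N_def)

lemma N_ne: assumes u: "u \<in> V" shows "N u \<noteq> {}"
proof -
  have "V - {u} \<noteq> {}" using infinite_V by (metis Diff_eq_empty_iff finite.intros finite_subset)
  then obtain w where w: "w \<in> V" "w \<noteq> u" by blast
  have "E\<^sup>*\<^sup>* u w" using connected u w by blast
  then obtain y where "E u y" using w(2) by (metis converse_rtranclpE)
  then show ?thesis by (auto simp: N_def)
qed

lemma d_pos: "u \<in> V \<Longrightarrow> d u > 0"
  using N_fin N_ne by (simp add: d_def card_gt_0_iff)

definition K where "K n w = measure_pmf.prob (srw_path E n w) {xs. xs!n = v \<and> (\<forall>j<n. xs!j \<noteq> v)}"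

lemma K0: "K 0 w = (if w = v then 1 else 0)" by (simp add: K_def)

definition Q where "Q a x = (if x = v then 0 else (\<Sum>y\<in>N x. a y) / d x)"

lemma KSuc: assumes w: "w \<in> V" shows "K (Suc n) w = Q (K n) w"
proof -
  have pre: "(\<lambda>ys. w#ys) -` {xs. xs!Suc n = v \<and> (\<forall>j<Suc n. xs!j \<noteq> v)} = (if w = v then {} else {ys. ys!n = v \<and> (\<forall>j<n. ys!j \<noteq> v)})"
    by (auto simp: less_Suc_eq_0_disj)
  have "K (Suc n) w = (\<Sum>x\<in>N w. measure_pmf.prob (srw_path E n x) ((\<lambda>ys. w#ys) -` {xs. xs!Suc n = v \<and> (\<forall>j<Suc n. xs!j \<noteq> v)})) / d w"
    using N_fin[OF w] N_ne[OF w] unfolding K_def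
    by (simp add: srw_step_def measure_bind_pmf_of_set d_def N_def del: vimage_Collect_eq)
  also have "\<dots> = Q (K n) w" unfolding pre by (simp add: Q_def K_def)
  finally show ?thesis .
qed

lemma FR: "first_return_prob E v (Suc n) = (\<Sum>x\<in>N v. K n x) / d v"
proof -
  have pre: "(\<lambda>ys. v#ys) -` {xs. xs!Suc n = v \<and> (\<forall>i\<in>{1..<Suc n}. xs!i \<noteq> v)} = {ys. ys!n = v \<and> (\<forall>j<n. ys!j \<noteq> v)}"
  proof -
    have e: "{1..<Suc n} = Suc ` {..<n}" by (auto simp: image_Suc_lessThan)
    show ?thesis unfolding e by auto
  qed
  have "first_return_prob E v (Suc n) = (\<Sum>x\<in>N v. measure_pmf.prob (srw_path E n x) ((\<lambda>ys. v#ys) -` {xs. xs!Suc n = v \<and> (\<forall>i\<in>{1..<Suc n}. xs!i \<noteq> v)})) / d v"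
    using N_fin[OF v_in_V] N_ne[OF v_in_V] unfolding first_return_prob_def
    by (simp add: srw_step_def measure_bind_pmf_of_set d_def N_def del: vimage_Collect_eq One_nat_def)
  also have "\<dots> = (\<Sum>x\<in>N v. K n x) / d v" unfolding pre K_def ..
  finally show ?thesis .
qed


primrec R where "R 0 = {v}" | "R (Suc n) = R n \<union> (\<Union>u\<in>R n. N u)"

lemma R_V: "R n \<subseteq> V"
  by (induct n) (auto simp: v_in_V N_V)

lemma R_fin: "finite (R n)"
  using R_V by (induct n) (auto intro!: N_fin)

lemma R_mono: "m \<le> n \<Longrightarrow> R m \<subseteq> R n"
  by (rule lift_Suc_mono_le[of R]) auto

lemma K_supp: "w \<in> V \<Longrightarrow> K n w \<noteq> 0 \<Longrightarrow> w \<in> R n"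
proof (induct n arbitrary: w)
  case 0 then show ?case by (simp add: K0 split: if_splits)
next
  case (Suc n)
  then have "w \<noteq> v" "(\<Sum>x\<in>N w. K n x) \<noteq> 0" by (auto simp: KSuc Q_def split: if_splits)
  then obtain x where x: "x \<in> N w" "K n x \<noteq> 0" by (meson sum.neutral)
  then have "x \<in> R n" using Suc N_V by blast
  moreover have "w \<in> N x" using x sym by (auto simp: N_def)
  ultimately show ?case by auto
qed

lemma K_v: "K (Suc n) v = 0" by (simp add: KSuc v_in_V Q_def)

lemma nbsum:
  assumes T: "finite T" "T \<subseteq> V" and x: "x \<in> V" and supp: "\<forall>y\<in>V. a y \<noteq> 0 \<longrightarrow> y \<in> T"
  shows "(\<Sum>y\<in>N x. a y) = (\<Sum>y\<in>T. if E x y then a y else (0::real))"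
proof -
  have "(\<Sum>y\<in>T. if E x y then a y else 0) = (\<Sum>y\<in>T \<inter> N x. a y)"
    using T by (simp add: sum.inter_restrict N_def)
  also have "\<dots> = (\<Sum>y\<in>N x. a y)"
    by (rule sum.mono_neutral_left) (use N_fin[OF x] supp N_V in auto)
  finally show ?thesis by simp
qed

lemma edge:
  assumes T: "finite T" "T \<subseteq> V" and sa: "\<forall>y\<in>V. a y \<noteq> 0 \<longrightarrow> y \<in> T"
    and bv: "b v = 0"
  shows "(\<Sum>x\<in>T. d x * b x * Q a x) = (\<Sum>x\<in>T. \<Sum>y\<in>T. if E x y then b x * a y else 0)"
proof (rule sum.cong[OF refl])
  fix x assume xT: "x \<in> T"
  then have xV: "x \<in> V" using T by auto
  show "d x * b x * Q a x = (\<Sum>y\<in>T. if E x y then b x * a y else 0)"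
  proof (cases "x = v")
    case True
    then have b0: "b x = 0" using bv by simp
    have "(\<Sum>y\<in>T. if E x y then b x * a y else 0) = 0" by (rule sum.neutral) (simp add: b0)
    then show ?thesis using True by (simp add: Q_def)
  next
    case False
    then have "d x * b x * Q a x = b x * (\<Sum>y\<in>N x. a y)" using d_pos[OF xV] by (simp add: Q_def)
    also have "\<dots> = b x * (\<Sum>y\<in>T. if E x y then a y else 0)" using nbsum[OF T xV sa] by simp
    also have "\<dots> = (\<Sum>y\<in>T. if E x y then b x * a y else 0)"
      by (simp add: sum_distrib_left if_distrib cong: if_cong)
    finally show ?thesis .
  qed
qed

lemma selfadj:
  assumes T: "finite T" "T \<subseteq> V" and sa: "\<forall>y\<in>V. a y \<noteq> 0 \<longrightarrow> y \<in> T"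
    and sb: "\<forall>y\<in>V. b y \<noteq> 0 \<longrightarrow> y \<in> T" and av: "a v = 0" and bv: "b v = 0"
  shows "(\<Sum>x\<in>T. d x * b x * Q a x) = (\<Sum>x\<in>T. d x * a x * Q b x)"
proof -
  have "(\<Sum>x\<in>T. d x * b x * Q a x) = (\<Sum>x\<in>T. \<Sum>y\<in>T. if E x y then b x * a y else 0)"
    by (rule edge[of T a b, OF T sa bv])
  also have "\<dots> = (\<Sum>y\<in>T. \<Sum>x\<in>T. if E x y then b x * a y else 0)" by (rule sum.swap)
  also have "\<dots> = (\<Sum>y\<in>T. \<Sum>x\<in>T. if E y x then a y * b x else 0)"
    by (intro sum.cong refl) (auto dest: sym)
  also have "\<dots> = (\<Sum>x\<in>T. d x * a x * Q b x)"
    by (rule edge[of T b a, OF T sb av, symmetric])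
  finally show ?thesis .
qed

lemma contr:
  assumes T: "finite T" "T \<subseteq> V" and sa: "\<forall>y\<in>V. a y \<noteq> 0 \<longrightarrow> y \<in> T"
  shows "(\<Sum>x\<in>T. d x * (Q a x)^2) \<le> (\<Sum>x\<in>T. d x * (a x)^2)"
proof -
  have sa2: "\<forall>y\<in>V. (a y)^2 \<noteq> 0 \<longrightarrow> y \<in> T" using sa by auto
  have "(\<Sum>x\<in>T. d x * (Q a x)^2) \<le> (\<Sum>x\<in>T. \<Sum>y\<in>T. if E x y then (a y)^2 else 0)"
  proof (rule sum_mono)
    fix x assume xT: "x \<in> T"
    then have xV: "x \<in> V" using T by auto
    show "d x * (Q a x)^2 \<le> (\<Sum>y\<in>T. if E x y then (a y)^2 else 0)"
    proof (cases "x = v")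
      case True then show ?thesis by (simp add: Q_def sum_nonneg)
    next
      case False
      have dp: "d x > 0" using d_pos[OF xV] .
      have "d x * (Q a x)^2 = (\<Sum>y\<in>N x. a y)^2 / d x" using False dp
        by (simp add: Q_def power2_eq_square)
      also have "\<dots> \<le> (\<Sum>y\<in>N x. (a y)^2)"
        using dp sum_squared_le_sum_of_squares[of a "N x"] by (simp add: d_def pos_divide_le_eq)
      also have "\<dots> = (\<Sum>y\<in>T. if E x y then (a y)^2 else 0)" by (rule nbsum[OF T xV sa2])
      finally show ?thesis .
    qed
  qed
  also have "\<dots> = (\<Sum>y\<in>T. \<Sum>x\<in>T. if E x y then (a y)^2 else 0)" by (rule sum.swap)
  also have "\<dots> = (\<Sum>y\<in>T. (a y)^2 * card {x\<in>T. E x y})"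
    using T by (simp add: sum.inter_filter[symmetric] mult.commute)
  also have "\<dots> \<le> (\<Sum>y\<in>T. d y * (a y)^2)"
  proof (rule sum_mono)
    fix y assume "y \<in> T"
    then have yV: "y \<in> V" using T by auto
    have "card {x\<in>T. E x y} \<le> card (N y)"
      by (rule card_mono[OF N_fin[OF yV]]) (auto simp: N_def dest: sym)
    then have "real (card {x\<in>T. E x y}) \<le> d y" by (simp add: d_def)
    then show "(a y)^2 * card {x\<in>T. E x y} \<le> d y * (a y)^2"
      by (metis mult.commute mult_left_mono zero_le_power2)
  qed
  finally show ?thesis .
qed


lemma KS: "x \<in> R M \<Longrightarrow> K (Suc n) x = Q (K n) x"
  using KSuc R_V by blast

definition ip where "ip T a b = (\<Sum>x\<in>T. d x * a x * b x)"

lemma K_suppT: "m \<le> M \<Longrightarrow> \<forall>y\<in>V. K m y \<noteq> 0 \<longrightarrow> y \<in> R M"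
  using K_supp R_mono by blast

lemma stepK:
  assumes "c \<ge> 1" "b \<ge> 1" "c + 1 \<le> M" "b + 1 \<le> M"
  shows "ip (R M) (K c) (K (Suc b)) = ip (R M) (K (Suc c)) (K b)"
proof -
  have cv: "K c v = 0" using assms(1) K_v by (metis Suc_pred' not_one_le_zero neq0_conv)
  have bv: "K b v = 0" using assms(2) K_v by (metis Suc_pred' not_one_le_zero neq0_conv)
  have "ip (R M) (K c) (K (Suc b)) = (\<Sum>x\<in>R M. d x * K c x * Q (K b) x)"
    unfolding ip_def by (intro sum.cong refl) (simp add: KS)
  also have "\<dots> = (\<Sum>x\<in>R M. d x * K b x * Q (K c) x)"
    by (rule selfadj[OF R_fin R_V K_suppT K_suppT bv cv]) (use assms in auto)
  also have "\<dots> = ip (R M) (K (Suc c)) (K b)"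
    unfolding ip_def by (intro sum.cong refl) (simp add: KS mult_ac)
  finally show ?thesis .
qed

lemma shift:
  assumes "a \<ge> 1" "b \<ge> 1" "a + j \<le> M" "b + j \<le> M"
  shows "ip (R M) (K a) (K (b + j)) = ip (R M) (K (a + j)) (K b)"
  using assms
proof (induct j arbitrary: b)
  case 0 then show ?case by simp
next
  case (Suc j)
  have "ip (R M) (K a) (K (b + Suc j)) = ip (R M) (K a) (K (Suc b + j))" by simp
  also have "\<dots> = ip (R M) (K (a + j)) (K (Suc b))" using Suc.hyps[of "Suc b"] Suc.prems by simp
  also have "\<dots> = ip (R M) (K (Suc (a + j))) (K b)" by (rule stepK) (use Suc in auto)
  finally show ?case by simp
qed

lemma firstK:
  assumes "m \<le> M" "1 \<le> M"
  shows "(\<Sum>x\<in>N v. K m x) = ip (R M) (K 1) (K m)"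
proof -
  have "ip (R M) (K 1) (K m) = (\<Sum>x\<in>R M. if E v x then K m x else 0)"
    unfolding ip_def
  proof (intro sum.cong refl)
    fix x assume "x \<in> R M"
    then have xV: "x \<in> V" using R_V by auto
    have "d x * K 1 x = (if E v x then 1 else 0)"
    proof (cases "x = v")
      case True then show ?thesis using no_loops by (simp add: K_v)
    next
      case False
      have "(\<Sum>y\<in>N x. K 0 y) = (if v \<in> N x then 1 else 0)"
        using N_fin[OF xV] by (simp add: K0)
      then show ?thesis using False d_pos[OF xV]
        by (auto simp: KSuc[OF xV] Q_def N_def dest: sym)
    qed
    then show "d x * K 1 x * K m x = (if E v x then K m x else 0)" by simp
  qed
  also have "\<dots> = (\<Sum>x\<in>N v. K m x)"
    by (rule nbsum[OF R_fin R_V v_in_V K_suppT[OF assms(1)], symmetric])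
  finally show ?thesis by simp
qed

lemma contrK:
  assumes "t + 1 \<le> M"
  shows "ip (R M) (K (Suc t)) (K (Suc t)) \<le> ip (R M) (K t) (K t)"
proof -
  have "ip (R M) (K (Suc t)) (K (Suc t)) = (\<Sum>x\<in>R M. d x * (Q (K t) x)^2)"
    unfolding ip_def by (intro sum.cong refl) (simp add: KS power2_eq_square)
  also have "\<dots> \<le> (\<Sum>x\<in>R M. d x * (K t x)^2)"
    by (rule contr[OF R_fin R_V K_suppT]) (use assms in auto)
  also have "\<dots> = ip (R M) (K t) (K t)" unfolding ip_def by (simp add: power2_eq_square mult_ac)
  finally show ?thesis .
qed

lemma main:
  assumes t: "t \<ge> 1"
  shows "first_return_prob E v (2 * Suc t) \<le> first_return_prob E v (2 * t)"
proof -
  define M where "M = 2 * t + 2"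
  have dv: "d v > 0" using d_pos v_in_V by blast
  have "first_return_prob E v (2 * Suc t) = (\<Sum>x\<in>N v. K ((t + 1) + t) x) / d v"
  proof -
    have e: "2 * Suc t = Suc (t + 1 + t)" by simp
    show ?thesis unfolding e by (rule FR)
  qed
  also have "\<dots> = ip (R M) (K 1) (K ((t + 1) + t)) / d v"
    by (subst firstK[of _ M]) (auto simp: M_def)
  also have "\<dots> = ip (R M) (K (Suc t)) (K (Suc t)) / d v"
    by (subst shift) (use t in \<open>auto simp: M_def\<close>)
  also have "\<dots> \<le> ip (R M) (K t) (K t) / d v"
    using contrK[of t M] dv by (simp add: M_def divide_right_mono)
  also have "ip (R M) (K t) (K t) = ip (R M) (K 1) (K (t + (t - 1)))"
    by (subst shift) (use t in \<open>auto simp: M_def\<close>)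
  also have "\<dots> = (\<Sum>x\<in>N v. K (t + (t - 1)) x)"
    by (subst firstK[of _ M]) (auto simp: M_def)
  also have "\<dots> / d v = first_return_prob E v (2 * t)"
  proof -
    have e: "2 * t = Suc (t + (t - 1))" using t by simp
    show ?thesis unfolding e by (rule FR[symmetric])
  qed
  finally show ?thesis .
qed

end

theorem corollary2p3:
  fixes V :: "'a set" and E :: "'a \<Rightarrow> 'a \<Rightarrow> bool" and v :: 'a
  assumes edges_in_V: "\<And>u w. E u w \<Longrightarrow> u \<in> V \<and> w \<in> V"
    and sym: "\<And>u w. E u w \<Longrightarrow> E w u"
    and no_loops: "\<And>u. \<not> E u u"
    and locally_finite: "\<And>u. u \<in> V \<Longrightarrow> finite {w. E u w}"
    and connected: "\<And>u w. u \<in> V \<Longrightarrow> w \<in> V \<Longrightarrow> E\<^sup>*\<^sup>* u w"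
    and infinite_V: "infinite V"
    and v_in_V: "v \<in> V"
  shows "\<And>t. t \<ge> 1 \<Longrightarrow> first_return_prob E v (2 * Suc t) \<le> first_return_prob E v (2 * t)"
proof -
  interpret srwG V E v
    by (unfold_locales) (use assms in blast)+
  fix t :: nat assume "t \<ge> 1"
  then show "first_return_prob E v (2 * Suc t) \<le> first_return_prob E v (2 * t)" by (rule main)
qed

end
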